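(* Let $A_1A_2A_3$ be a gyrotriangle possessing a circumgyrocircle $C(A_1A_2A_3)$ in the Einstein gyrovector space $\mathbb{R}^n_s$, $n\ge2$, and $\gamma_{ij}=\gamma_{\ominus A_i\oplus A_j}$. Let $P\in(A_1\oplus\mathrm{span}\{\ominus A_1\oplus A_2,\ominus A_1\oplus A_3\})\cap\mathbb{R}^n_s$ be given by $P=\frac{m_1\gamma_{A_1}A_1+m_2\gamma_{A_2}A_2+m_3\gamma_{A_3}A_3}{m_1\gamma_{A_1}+m_2\gamma_{A_2}+m_3\gamma_{A_3}}$. Let $P'=P'(t)\ne P$ be the point of $C(A_1A_2A_3)$ with gyrobarycentric coordinates $m_1'=-(\gamma_{23}-1)t$, $m_2'=(\gamma_{12}-1)t^2+(\gamma_{13}-1)t$, $m_3'=(\gamma_{12}-1)t+(\gamma_{13}-1)$ with respect to $\{A_1,A_2,A_3\}$, $t\in\mathbb{R}\cup\{-\infty,\infty\}$, and let $P''$ be the point lying on both $C(A_1A_2A_3)$ and the gyroline through $P$ and $P'$ that is the second intersection point (in general $P''\ne P'$). Then $$P''=\frac{m_1''\gamma_{A_1}A_1+m_2''\gamma_{A_2}A_2+m_3''\gamma_{A_3}A_3}{m_1''\gamma_{A_1}+m_2''\gamma_{A_2}+m_3''\gamma_{A_3}},$$ with $m_1''=E_1E_2$, $m_2''=E_0E_1(\gamma_{13}-1)$, $m_3''=-E_0E_2(\gamma_{12}-1)$, where $E_0=m_2-m_3t$, $E_1=m_1(\gamma_{13}-1)+m_2(\gamma_{23}-1)+m_1(\gamma_{12}-1)t$,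 $E_2=m_1(\gamma_{13}-1)+m_1(\gamma_{12}-1)t+m_3(\gamma_{23}-1)t$.
   Context: Fix $s>0$; $\mathbb{R}^n_s=\{v\in\mathbb{R}^n:\|v\|<s\}$ with Einstein addition $u\oplus v=\frac{1}{1+u\cdot v/s^2}\{u+\frac{1}{\gamma_u}v+\frac{1}{s^2}\frac{\gamma_u}{1+\gamma_u}(u\cdot v)u\}$, $\gamma_v=(1-\|v\|^2/s^2)^{-1/2}$, $\ominus v=-v$. Gyrolines are intersections of Euclidean lines with the ball. A gyrotriangle $A_1A_2A_3$ has $\ominus A_1\oplus A_2,\ominus A_1\oplus A_3$ linearly independent; its circumgyrocircle is the set of points of the gyroplane $(A_1\oplus\mathrm{span}\{\ominus A_1\oplus A_2,\ominus A_1\oplus A_3\})\cap\mathbb{R}^n_s$ at gyrodistance $R$ from the point $O$ of that gyroplane equigyrodistant (gyrodistance $\|\ominus X\oplus Y\|$) from the three vertices, $R$ being this common gyrodistance. A point with gyrobarycentric coordinates $(\mu_1:\mu_2:\mu_3)$ (homogeneous) is $\frac{\sum\mu_k\gamma_{A_k}A_k}{\sum\mu_k\gamma_{A_k}}$. *)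

theory Defs
  imports "HOL-Analysis.Analysis"
begin

definition gball :: "real \<Rightarrow> 'a::euclidean_space set" where
  "gball s = {v. norm v < s}"

definition egamma :: "real \<Rightarrow> 'a::euclidean_space \<Rightarrow> real" where
  "egamma s v = 1 / sqrt (1 - (norm v)\<^sup>2 / s\<^sup>2)"

definition eadd :: "real \<Rightarrow> 'a::euclidean_space \<Rightarrow> 'a \<Rightarrow> 'a" where
  "eadd s u v = (1 / (1 + (u \<bullet> v) / s\<^sup>2)) *\<^sub>R
      (u + (1 / egamma s u) *\<^sub>R v
         + ((1 / s\<^sup>2) * (egamma s u / (1 + egamma s u)) * (u \<bullet> v)) *\<^sub>R u)"

definition gdist :: "real \<Rightarrow> 'a::euclidean_space \<Rightarrow> 'a \<Rightarrow> real" where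
  "gdist s X Y = norm (eadd s (- X) Y)"

definition gyrotriangle :: "real \<Rightarrow> 'a::euclidean_space \<Rightarrow> 'a \<Rightarrow> 'a \<Rightarrow> bool" where
  "gyrotriangle s A1 A2 A3 \<longleftrightarrow> A1 \<in> gball s \<and> A2 \<in> gball s \<and> A3 \<in> gball s \<and>
     \<not> dependent {eadd s (- A1) A2, eadd s (- A1) A3} \<and>
     eadd s (- A1) A2 \<noteq> eadd s (- A1) A3"

definition gyroplane :: "real \<Rightarrow> 'a::euclidean_space \<Rightarrow> 'a \<Rightarrow> 'a \<Rightarrow> 'a set" where
  "gyroplane s A1 A2 A3 =
     {eadd s A1 w | w. w \<in> span {eadd s (- A1) A2, eadd s (- A1) A3}} \<inter> gball s"

definition circumcentre :: "real \<Rightarrow> 'a::euclidean_space \<Rightarrow> 'a \<Rightarrow> 'a \<Rightarrow> 'a \<Rightarrow> bool" where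
  "circumcentre s A1 A2 A3 Ctr \<longleftrightarrow> Ctr \<in> gyroplane s A1 A2 A3 \<and>
     gdist s Ctr A1 = gdist s Ctr A2 \<and> gdist s Ctr A1 = gdist s Ctr A3"

definition circumgyrocircle :: "real \<Rightarrow> 'a::euclidean_space \<Rightarrow> 'a \<Rightarrow> 'a \<Rightarrow> 'a \<Rightarrow> 'a set" where
  "circumgyrocircle s A1 A2 A3 Ctr =
     {X \<in> gyroplane s A1 A2 A3. gdist s Ctr X = gdist s Ctr A1}"

definition gyroline :: "real \<Rightarrow> 'a::euclidean_space \<Rightarrow> 'a \<Rightarrow> 'a set" where
  "gyroline s P Q = {P + u *\<^sub>R (Q - P) | u. True} \<inter> gball s"

definition gbary :: "real \<Rightarrow> 'a::euclidean_space \<Rightarrow> 'a \<Rightarrow> 'a \<Rightarrow> real \<Rightarrow> real \<Rightarrow> real \<Rightarrow> 'a" where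
  "gbary s A1 A2 A3 m1 m2 m3 =
     (1 / (m1 * egamma s A1 + m2 * egamma s A2 + m3 * egamma s A3)) *\<^sub>R
     ((m1 * egamma s A1) *\<^sub>R A1 + (m2 * egamma s A2) *\<^sub>R A2 + (m3 * egamma s A3) *\<^sub>R A3)"

definition gbary_den :: "real \<Rightarrow> 'a::euclidean_space \<Rightarrow> 'a \<Rightarrow> 'a \<Rightarrow> real \<Rightarrow> real \<Rightarrow> real \<Rightarrow> real" where
  "gbary_den s A1 A2 A3 m1 m2 m3 = m1 * egamma s A1 + m2 * egamma s A2 + m3 * egamma s A3"

text \<open>For infinite t the homogeneous
  coordinates are taken as the leading coefficients (m' divided by t^2,
  the E_i divided by t), i.e. the limit of the projective point.\<close>

fun mp1 :: "real \<Rightarrow> real \<Rightarrow> real \<Rightarrow> ereal \<Rightarrow> real" where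
  "mp1 g12 g13 g23 (ereal t) = - (g23 - 1) * t"
| "mp1 g12 g13 g23 PInfty = 0"
| "mp1 g12 g13 g23 MInfty = 0"

fun mp2 :: "real \<Rightarrow> real \<Rightarrow> real \<Rightarrow> ereal \<Rightarrow> real" where
  "mp2 g12 g13 g23 (ereal t) = (g12 - 1) * t\<^sup>2 + (g13 - 1) * t"
| "mp2 g12 g13 g23 PInfty = g12 - 1"
| "mp2 g12 g13 g23 MInfty = g12 - 1"

fun mp3 :: "real \<Rightarrow> real \<Rightarrow> real \<Rightarrow> ereal \<Rightarrow> real" where
  "mp3 g12 g13 g23 (ereal t) = (g12 - 1) * t + (g13 - 1)"
| "mp3 g12 g13 g23 PInfty = 0"
| "mp3 g12 g13 g23 MInfty = 0"

fun E0 :: "real \<Rightarrow> real \<Rightarrow> real \<Rightarrow> real \<Rightarrow> real \<Rightarrow> real \<Rightarrow> ereal \<Rightarrow> real" where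
  "E0 g12 g13 g23 m1 m2 m3 (ereal t) = m2 - m3 * t"
| "E0 g12 g13 g23 m1 m2 m3 PInfty = - m3"
| "E0 g12 g13 g23 m1 m2 m3 MInfty = - m3"

fun E1 :: "real \<Rightarrow> real \<Rightarrow> real \<Rightarrow> real \<Rightarrow> real \<Rightarrow> real \<Rightarrow> ereal \<Rightarrow> real" where
  "E1 g12 g13 g23 m1 m2 m3 (ereal t) =
     m1 * (g13 - 1) + m2 * (g23 - 1) + m1 * (g12 - 1) * t"
| "E1 g12 g13 g23 m1 m2 m3 PInfty = m1 * (g12 - 1)"
| "E1 g12 g13 g23 m1 m2 m3 MInfty = m1 * (g12 - 1)"

fun E2 :: "real \<Rightarrow> real \<Rightarrow> real \<Rightarrow> real \<Rightarrow> real \<Rightarrow> real \<Rightarrow> ereal \<Rightarrow> real" where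
  "E2 g12 g13 g23 m1 m2 m3 (ereal t) =
     m1 * (g13 - 1) + m1 * (g12 - 1) * t + m3 * (g23 - 1) * t"
| "E2 g12 g13 g23 m1 m2 m3 PInfty = m1 * (g12 - 1) + m3 * (g23 - 1)"
| "E2 g12 g13 g23 m1 m2 m3 MInfty = m1 * (g12 - 1) + m3 * (g23 - 1)"

end

theory Submission
  imports Defs
begin


lemma alg0:
  fixes g S x p k a r b :: real
  assumes "k*S*(1+g) = g" "a*g = 1" "x*g^2 = S*(g^2-1)" "r*S = 1" "b*(1+g) = 1"
  shows "S*(1+p*r)^2 - (1+k*p)^2*x - 2*(1+k*p)*a*p = S - x"
proof -
  have kk: "k = g*r*b" using assms
    by (metis mult.assoc mult.commute mult_1_right)
  have xx: "x = S - S*a*a" using assms(2,3) by algebra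
  have h1: "k*x = 1 - a" unfolding kk xx using assms(2,4,5) by algebra
  have h2: "k*k*x + 2*k*a = r" using h1 unfolding kk using assms(2,4,5) by algebra
  have "S*(1+p*r)^2 - (1+k*p)^2*x - 2*(1+k*p)*a*p = S - x + 2*p*(S*r - k*x - a) + p^2*(S*r*r - k*k*x - 2*k*a)"
    by algebra
  also have "\<dots> = S - x" using h1 h2 assms(4) by (simp add: algebra_simps)
  finally show ?thesis .
qed


lemma eg_pos: assumes "s>0" "norm v < s" shows "egamma s v > 0"
proof -
  have "(norm v)^2 < s^2" using assms by (simp add: power_strict_mono)
  hence "1 - (norm v)^2/s^2 > 0" using assms by simp
  thus ?thesis unfolding egamma_def by simp
qed

lemma eg_sq: assumes "s>0" "norm v < s" shows "(egamma s v)^2 * (1 - (norm v)^2/s^2) = 1"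
proof -
  have "(norm v)^2 < s^2" using assms by (simp add: power_strict_mono)
  hence z: "1 - (norm v)^2/s^2 > 0" using assms by simp
  have "s^2 \<noteq> (norm v)^2" using \<open>(norm v)^2 < s^2\<close> by simp
  show ?thesis unfolding egamma_def using z \<open>s^2 \<noteq> (norm v)^2\<close> by (simp add: power_divide)
qed

lemma eg_rel: assumes "s>0" "norm v < s" shows "(norm v)^2 * (egamma s v)^2 = s^2 * ((egamma s v)^2 - 1)"
  using eg_sq[OF assms] assms(1) by (simp add: field_simps)

lemma phi_pos: assumes "s>0" "norm u < s" "norm v < s" shows "1 + (u \<bullet> v)/s^2 > 0"
proof -
  have "\<bar>u \<bullet> v\<bar> \<le> norm u * norm v" by (rule Cauchy_Schwarz_ineq2)
  also have "\<dots> < s * s" using assms by (meson mult_strict_mono' norm_ge_zero)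
  finally have "\<bar>u \<bullet> v\<bar> < s^2" by (simp add: power2_eq_square)
  thus ?thesis using assms(1) by (auto simp: field_simps abs_less_iff)
qed

lemma eadd_expand: "eadd s u v = (1/(1 + (u \<bullet> v)/s^2)) *\<^sub>R
   ((1 + (1/s^2)*(egamma s u/(1 + egamma s u))*(u \<bullet> v)) *\<^sub>R u + (1/egamma s u) *\<^sub>R v)"
  unfolding eadd_def by (simp add: algebra_simps)

lemma norm_comb: "(norm (c *\<^sub>R (a *\<^sub>R u + b *\<^sub>R v)))^2 = c^2 * (a^2 * (norm u)^2 + 2*a*b*(u \<bullet> v) + b^2*(norm v)^2)"
  unfolding power2_norm_eq_inner
  by (simp add: inner_add_left inner_add_right inner_commute algebra_simps power2_eq_square)

lemma eadd_norm:
  assumes "s>0" "norm u < s" "norm v < s"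
  shows "(norm (eadd s u v))^2 = s^2 - (s^2 - (norm u)^2)*(s^2 - (norm v)^2)/(s^2*(1 + (u \<bullet> v)/s^2)^2)"
proof -
  define g where "g = egamma s u"
  define S where "S = s^2"
  define x where "x = (norm u)^2"
  define y where "y = (norm v)^2"
  define p where "p = u \<bullet> v"
  define k where "k = (1/s^2)*(g/(1+g))"
  define r where "r = 1/S"
  define b where "b = 1/(1+g)"
  define a where "a = 1/g"
  define ph where "ph = 1 + p/S"
  have gp: "g > 0" using eg_pos[OF assms(1,2)] g_def by simp
  have Sp: "S > 0" using assms S_def by simp
  have php: "ph > 0" using phi_pos[OF assms] ph_def p_def S_def by simp
  have rel: "x*g^2 = S*(g^2-1)" using eg_rel[OF assms(1,2)] g_def x_def S_def by (simp add: algebra_simps)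
  have A: "S*(1+p*r)^2 - (1+k*p)^2*x - 2*(1+k*p)*a*p = S - x"
  proof (rule alg0[where b=b])
    have "1+g \<noteq> 0" "s^2 \<noteq> 0" using gp assms(1) by auto
    thus "k*S*(1+g) = g" unfolding k_def S_def by simp
  qed (use gp Sp rel in \<open>auto simp: k_def a_def r_def b_def S_def field_simps\<close>)
  have xa: "x = S - S*a*a" using rel gp unfolding a_def by (simp add: field_simps power2_eq_square)
  have e: "(norm (eadd s u v))^2 = (1/ph)^2 * ((1+k*p)^2*x + 2*(1+k*p)*a*p + a^2*y)"
    unfolding eadd_expand norm_comb
    by (simp add: g_def S_def x_def y_def p_def k_def a_def ph_def mult.commute)
  have phr: "ph = 1 + p*r" unfolding ph_def r_def by simp
  have "S*ph^2 - ((1+k*p)^2*x + 2*(1+k*p)*a*p + a^2*y) = (S - x)*(S - y)/S"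
    using A unfolding phr xa using Sp by (simp add: field_simps power2_eq_square)
  hence "(norm (eadd s u v))^2 = S - (S - x)*(S - y)/(S*ph^2)"
    unfolding e using php Sp by (simp add: field_simps)
  thus ?thesis by (simp add: S_def x_def y_def ph_def p_def)
qed


lemma alg_c:
  fixes g S x q k a r b ps ps' :: real
  assumes "k*S*(1+g) = g" "a*g = 1" "x*g^2 = S*(g^2-1)" "r*S = 1" "b*(1+g) = 1"
    "ps = 1 - q*r" "ps*ps' = 1"
  shows "(1 + ((-(1 - k*q)*ps')*x + (a*ps')*q)*r) * (g^2*ps) = 1"
    and "1 + k*((-(1 - k*q)*ps')*x + (a*ps')*q) + a*(-(1 - k*q)*ps') = 0"
proof -
  have kk: "k = g*r*b" using assms
    by (metis mult.assoc mult.commute mult_1_right)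
  have xx: "x = S - S*a*a" using assms(2,3) by algebra
  have h1: "k*x = 1 - a" unfolding kk xx using assms(2,4,5) by algebra
  have xr: "x*r = 1 - a*a" unfolding xx using assms(4) by algebra
  show "(1 + ((-(1 - k*q)*ps')*x + (a*ps')*q)*r) * (g^2*ps) = 1"
    using h1 xr assms(2,6,7) by algebra
  show "1 + k*((-(1 - k*q)*ps')*x + (a*ps')*q) + a*(-(1 - k*q)*ps') = 0"
    using h1 xr assms(2,6,7) kk assms(4,5) by algebra
qed


lemma eg_minus[simp]: "egamma s (- v) = egamma s v"
  unfolding egamma_def by simp

lemma aux_div: fixes a b S f :: real assumes "S \<noteq> 0" "f \<noteq> 0"
  shows "(S - (S - x)*(S - y)/(S*f)) / S = 1 - (1 - x/S)*(1 - y/S)/f"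
  using assms by (simp add: field_simps)

lemma eadd_ball_gamma:
  assumes "s>0" "norm u < s" "norm v < s"
  shows "1 - (norm (eadd s u v))^2/s^2 = (1 - (norm u)^2/s^2)*(1 - (norm v)^2/s^2)/(1 + (u \<bullet> v)/s^2)^2"
proof -
  have p: "1 + (u \<bullet> v)/s^2 > 0" using phi_pos[OF assms] .
  have S: "s^2 \<noteq> 0" using assms by simp
  have f: "(1 + (u \<bullet> v)/s^2)^2 \<noteq> 0" using p by simp
  have "(norm (eadd s u v))^2/s^2 = 1 - (1 - (norm u)^2/s^2)*(1 - (norm v)^2/s^2)/(1 + (u \<bullet> v)/s^2)^2"
    unfolding eadd_norm[OF assms] by (rule aux_div[OF S f])
  thus ?thesis by simp
qed

lemma eadd_in_ball:
  assumes "s>0" "norm u < s" "norm v < s"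
  shows "norm (eadd s u v) < s"
proof -
  have "(norm u)^2 < s^2" "(norm v)^2 < s^2" using assms by (simp_all add: power_strict_mono)
  hence a: "1 - (norm u)^2/s^2 > 0" "1 - (norm v)^2/s^2 > 0" using assms by auto
  have p: "1 + (u \<bullet> v)/s^2 > 0" using phi_pos[OF assms] .
  have "1 - (norm (eadd s u v))^2/s^2 > 0" unfolding eadd_ball_gamma[OF assms]
    using a p by (intro divide_pos_pos mult_pos_pos) auto
  hence "(norm (eadd s u v))^2/s^2 < 1" by simp
  hence nsq: "(norm (eadd s u v))^2 < s^2" using assms(1) by (simp add: divide_less_eq)
  show ?thesis by (rule power2_less_imp_less[OF nsq]) (use assms(1) in simp)
qed

lemma eadd_gamma:
  assumes "s>0" "norm u < s" "norm v < s"
  shows "egamma s (eadd s u v) = egamma s u * egamma s v * (1 + (u \<bullet> v)/s^2)"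
proof -
  have "(norm u)^2 < s^2" "(norm v)^2 < s^2" using assms by (simp_all add: power_strict_mono)
  hence a: "1 - (norm u)^2/s^2 > 0" "1 - (norm v)^2/s^2 > 0" using assms by auto
  have p: "1 + (u \<bullet> v)/s^2 > 0" using phi_pos[OF assms] .
  define su where "su = sqrt (1 - (norm u)^2/s^2)"
  define sv where "sv = sqrt (1 - (norm v)^2/s^2)"
  define ph where "ph = 1 + (u \<bullet> v)/s^2"
  have su: "su > 0" "sv > 0" using a su_def sv_def by auto
  have "sqrt (1 - (norm (eadd s u v))^2/s^2) = su * sv / ph"
    unfolding eadd_ball_gamma[OF assms] su_def sv_def ph_def
    using p by (simp add: real_sqrt_mult real_sqrt_divide)
  hence "egamma s (eadd s u v) = 1 / (su * sv / ph)" unfolding egamma_def by simp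
  also have "\<dots> = (1/su) * (1/sv) * ph" using su p ph_def by simp
  finally show ?thesis unfolding egamma_def su_def sv_def ph_def .
qed


lemma eadd_cancel:
  assumes "s>0" "norm A < s" "norm X < s"
  shows "eadd s A (eadd s (-A) X) = X"
proof -
  define g where "g = egamma s A"
  define S where "S = s^2"
  define x where "x = (norm A)^2"
  define q where "q = A \<bullet> X"
  define k where "k = (1/s^2)*(g/(1+g))"
  define r where "r = 1/S"
  define b where "b = 1/(1+g)"
  define a where "a = 1/g"
  define ps where "ps = 1 - q*r"
  define ps' where "ps' = 1/ps"
  have gp: "g > 0" using eg_pos[OF assms(1,2)] g_def by simp
  have Sp: "S > 0" using assms S_def by simp
  have psp: "ps > 0" using phi_pos[OF assms(1) _ assms(3), of "-A"] assms(2) unfolding ps_def q_def r_def S_def by simp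
  have rel: "x*g^2 = S*(g^2-1)" using eg_rel[OF assms(1,2)] g_def x_def S_def by (simp add: algebra_simps)
  have kS: "k*S*(1+g) = g" proof -
    have "1+g \<noteq> 0" "s^2 \<noteq> 0" using gp assms(1) by auto
    thus "k*S*(1+g) = g" unfolding k_def S_def by simp
  qed
  have rels: "a*g = 1" "r*S = 1" "b*(1+g) = 1" "ps*ps' = 1" using gp Sp psp by (auto simp: a_def r_def b_def ps'_def)
  note C = alg_c[OF kS rels(1) rel rels(2) rels(3) ps_def rels(4)]
  define w1 where "w1 = -(1 - k*q)*ps'"
  define w2 where "w2 = a*ps'"
  have w: "eadd s (-A) X = w1 *\<^sub>R A + w2 *\<^sub>R X"
    unfolding eadd_expand w1_def w2_def ps'_def ps_def
    by (simp add: g_def k_def a_def q_def r_def S_def algebra_simps divide_inverse)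
  have Aw: "A \<bullet> (eadd s (-A) X) = w1*x + w2*q"
    unfolding w by (simp add: inner_add_right x_def q_def power2_norm_eq_inner)
  have "eadd s A (eadd s (-A) X) = (1/(1 + (w1*x + w2*q)*r)) *\<^sub>R
       ((1 + k*(w1*x + w2*q)) *\<^sub>R A + a *\<^sub>R (w1 *\<^sub>R A + w2 *\<^sub>R X))"
    unfolding eadd_expand[of s A] Aw unfolding w by (simp add: g_def k_def a_def r_def S_def divide_inverse)
  also have "\<dots> = (1/(1 + (w1*x + w2*q)*r)) *\<^sub>R
       ((1 + k*(w1*x + w2*q) + a*w1) *\<^sub>R A + (a*w2) *\<^sub>R X)"
    by (simp add: algebra_simps)
  also have "\<dots> = X"
  proof -
    have c1: "1 + k*(w1*x + w2*q) + a*w1 = 0" using C(2) unfolding w1_def w2_def .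
    have c2: "(1 + (w1*x + w2*q)*r) * (g^2*ps) = 1" using C(1) unfolding w1_def w2_def .
    have "(1/(1 + (w1*x + w2*q)*r)) * (a*w2) = 1"
    proof -
      have nz: "1 + (w1*x + w2*q)*r \<noteq> 0" using c2 by auto
      have "1/(1 + (w1*x + w2*q)*r) = g^2*ps" using c2 nz by (simp add: divide_eq_eq mult.commute)
      thus ?thesis using rels gp psp unfolding w2_def a_def by (simp add: field_simps power2_eq_square)
    qed
    thus ?thesis by (simp only: c1 scaleR_zero_left add_0_left scaleR_scaleR scaleR_one)
  qed
  finally show ?thesis .
qed


definition qf :: "real \<Rightarrow> real \<Rightarrow> real \<Rightarrow> real \<Rightarrow> real \<Rightarrow> real \<Rightarrow> real" where
  "qf a b c m1 m2 m3 = m1*m2*a + m1*m3*c + m2*m3*b"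

definition Bf :: "real \<Rightarrow> real \<Rightarrow> real \<Rightarrow> real \<Rightarrow> real \<Rightarrow> real \<Rightarrow> real \<Rightarrow> real \<Rightarrow> real \<Rightarrow> real" where
  "Bf a b c m1 m2 m3 n1 n2 n3 = a*(m1*n2+m2*n1) + c*(m1*n3+m3*n1) + b*(m2*n3+m3*n2)"

lemma mp1_inf[simp]: "mp1 g12 g13 g23 \<infinity> = 0" "mp1 g12 g13 g23 (-\<infinity>) = 0"
  by (simp only: PInfty_eq_infinity[symmetric] MInfty_eq_minfinity[symmetric] uminus_ereal.simps mp1.simps)+

lemma mp2_inf[simp]: "mp2 g12 g13 g23 \<infinity> = g12 - 1" "mp2 g12 g13 g23 (-\<infinity>) = g12 - 1"
  by (simp only: PInfty_eq_infinity[symmetric] MInfty_eq_minfinity[symmetric] uminus_ereal.simps mp2.simps)+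

lemma mp3_inf[simp]: "mp3 g12 g13 g23 \<infinity> = 0" "mp3 g12 g13 g23 (-\<infinity>) = 0"
  by (simp only: PInfty_eq_infinity[symmetric] MInfty_eq_minfinity[symmetric] uminus_ereal.simps mp3.simps)+

lemma E0_inf[simp]: "E0 g12 g13 g23 m1 m2 m3 \<infinity> = - m3" "E0 g12 g13 g23 m1 m2 m3 (-\<infinity>) = - m3"
  by (simp only: PInfty_eq_infinity[symmetric] MInfty_eq_minfinity[symmetric] uminus_ereal.simps E0.simps)+

lemma E1_inf[simp]: "E1 g12 g13 g23 m1 m2 m3 \<infinity> = m1 * (g12 - 1)" "E1 g12 g13 g23 m1 m2 m3 (-\<infinity>) = m1 * (g12 - 1)"
  by (simp only: PInfty_eq_infinity[symmetric] MInfty_eq_minfinity[symmetric] uminus_ereal.simps E1.simps)+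

lemma E2_inf[simp]: "E2 g12 g13 g23 m1 m2 m3 \<infinity> = m1 * (g12 - 1) + m3 * (g23 - 1)" "E2 g12 g13 g23 m1 m2 m3 (-\<infinity>) = m1 * (g12 - 1) + m3 * (g23 - 1)"
  by (simp only: PInfty_eq_infinity[symmetric] MInfty_eq_minfinity[symmetric] uminus_ereal.simps E2.simps)+

lemma q_mp_real0: fixes a b c t :: real shows "qf a b c (- b * t) (a * t\<^sup>2 + c * t) (a * t + c) = 0"
  unfolding qf_def power2_eq_square by (simp add: algebra_simps)

lemma q_mp: "qf (g12-1) (g23-1) (g13-1) (mp1 g12 g13 g23 t) (mp2 g12 g13 g23 t) (mp3 g12 g13 g23 t) = 0"
proof (cases t)
  case (real r) thus ?thesis using q_mp_real0[where a="g12-1" and b="g23-1" and c="g13-1" and t=r]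
    by (simp only: mp1.simps mp2.simps mp3.simps)
qed (simp_all add: qf_def)

lemma mpp_ident_real0:
  fixes a b c m1 m2 m3 t :: real
  defines "B \<equiv> Bf a b c m1 m2 m3 (- b * t) (a * t\<^sup>2 + c * t) (a * t + c)"
      and "Q \<equiv> qf a b c m1 m2 m3"
  shows "(m1 * c + m2 * b + m1 * a * t) * (m1 * c + m1 * a * t + m3 * b * t) = B*m1 - Q*(- b * t)"
    and "(m2 - m3 * t) * (m1 * c + m2 * b + m1 * a * t) * c = B*m2 - Q*(a * t\<^sup>2 + c * t)"
    and "- (m2 - m3 * t) * (m1 * c + m1 * a * t + m3 * b * t) * a = B*m3 - Q*(a * t + c)"
  unfolding B_def Q_def qf_def Bf_def power2_eq_square by (simp_all add: algebra_simps)

lemma mpp_ident_inf0: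
  fixes a b c m1 m2 m3 :: real
  defines "B \<equiv> Bf a b c m1 m2 m3 0 a 0"
      and "Q \<equiv> qf a b c m1 m2 m3"
  shows "(m1 * a) * (m1 * a + m3 * b) = B*m1 - Q*0"
    and "(- m3) * (m1 * a) * c = B*m2 - Q*a"
    and "- (- m3) * (m1 * a + m3 * b) * a = B*m3 - Q*0"
  unfolding B_def Q_def qf_def Bf_def by (simp_all add: algebra_simps)

lemma mpp_ident1:
  fixes g12 g13 g23 m1 m2 m3 :: real and t :: ereal
  defines "B \<equiv> Bf (g12-1) (g23-1) (g13-1) m1 m2 m3 (mp1 g12 g13 g23 t) (mp2 g12 g13 g23 t) (mp3 g12 g13 g23 t)"
      and "Q \<equiv> qf (g12-1) (g23-1) (g13-1) m1 m2 m3"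
  shows "E1 g12 g13 g23 m1 m2 m3 t * E2 g12 g13 g23 m1 m2 m3 t = B*m1 - Q*mp1 g12 g13 g23 t"
proof (cases t)
  case (real r) thus ?thesis unfolding B_def Q_def
    using mpp_ident_real0(1)[where a="g12-1" and b="g23-1" and c="g13-1" and t=r]
    by (simp only: mp1.simps mp2.simps mp3.simps E0.simps E1.simps E2.simps)
next
  case PInf thus ?thesis unfolding B_def Q_def
    using mpp_ident_inf0(1)[where a="g12-1" and b="g23-1" and c="g13-1"]
    by simp
next
  case MInf thus ?thesis unfolding B_def Q_def
    using mpp_ident_inf0(1)[where a="g12-1" and b="g23-1" and c="g13-1"]
    by simp
qed

lemma mpp_ident2:
  fixes g12 g13 g23 m1 m2 m3 :: real and t :: ereal
  defines "B \<equiv> Bf (g12-1) (g23-1) (g13-1) m1 m2 m3 (mp1 g12 g13 g23 t) (mp2 g12 g13 g23 t) (mp3 g12 g13 g23 t)"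
      and "Q \<equiv> qf (g12-1) (g23-1) (g13-1) m1 m2 m3"
  shows "E0 g12 g13 g23 m1 m2 m3 t * E1 g12 g13 g23 m1 m2 m3 t * (g13 - 1) = B*m2 - Q*mp2 g12 g13 g23 t"
proof (cases t)
  case (real r) thus ?thesis unfolding B_def Q_def
    using mpp_ident_real0(2)[where a="g12-1" and b="g23-1" and c="g13-1" and t=r]
    by (simp only: mp1.simps mp2.simps mp3.simps E0.simps E1.simps E2.simps)
next
  case PInf thus ?thesis unfolding B_def Q_def
    using mpp_ident_inf0(2)[where a="g12-1" and b="g23-1" and c="g13-1"]
    by simp
next
  case MInf thus ?thesis unfolding B_def Q_def
    using mpp_ident_inf0(2)[where a="g12-1" and b="g23-1" and c="g13-1"]
    by simp
qed

lemma mpp_ident3: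
  fixes g12 g13 g23 m1 m2 m3 :: real and t :: ereal
  defines "B \<equiv> Bf (g12-1) (g23-1) (g13-1) m1 m2 m3 (mp1 g12 g13 g23 t) (mp2 g12 g13 g23 t) (mp3 g12 g13 g23 t)"
      and "Q \<equiv> qf (g12-1) (g23-1) (g13-1) m1 m2 m3"
  shows "- E0 g12 g13 g23 m1 m2 m3 t * E2 g12 g13 g23 m1 m2 m3 t * (g12 - 1) = B*m3 - Q*mp3 g12 g13 g23 t"
proof (cases t)
  case (real r) thus ?thesis unfolding B_def Q_def
    using mpp_ident_real0(3)[where a="g12-1" and b="g23-1" and c="g13-1" and t=r]
    by (simp only: mp1.simps mp2.simps mp3.simps E0.simps E1.simps E2.simps)
next
  case PInf thus ?thesis unfolding B_def Q_def
    using mpp_ident_inf0(3)[where a="g12-1" and b="g23-1" and c="g13-1"]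
    by simp
next
  case MInf thus ?thesis unfolding B_def Q_def
    using mpp_ident_inf0(3)[where a="g12-1" and b="g23-1" and c="g13-1"]
    by simp
qed

lemma mpp_zero_inf:
  fixes a b c m1 m2 m3 :: real
  assumes a: "a \<noteq> 0" and b: "b \<noteq> 0" and c: "c \<noteq> 0"
    and z1: "(m1*a) * (m1*a + m3*b) = 0"
    and z2: "(- m3) * (m1*a) * c = 0"
    and z3: "- (- m3) * (m1*a + m3*b) * a = 0"
  shows "m1 = 0 \<and> m3 = 0"
proof -
  have h3: "m3 = 0 \<or> m1*a + m3*b = 0" using z3 a by simp
  have h2: "m3 = 0 \<or> m1 = 0" using z2 a c by simp
  have "m3 = 0" using h2 h3 b by auto
  thus ?thesis using z1 a by simp
qed

lemma mpp_zero:
  fixes g12 g13 g23 m1 m2 m3 :: real and t :: ereal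
  assumes a: "g12 - 1 \<noteq> 0" and b: "g23 - 1 \<noteq> 0" and c: "g13 - 1 \<noteq> 0"
    and z1: "E1 g12 g13 g23 m1 m2 m3 t * E2 g12 g13 g23 m1 m2 m3 t = 0"
    and z2: "E0 g12 g13 g23 m1 m2 m3 t * E1 g12 g13 g23 m1 m2 m3 t * (g13 - 1) = 0"
    and z3: "- E0 g12 g13 g23 m1 m2 m3 t * E2 g12 g13 g23 m1 m2 m3 t * (g12 - 1) = 0"
  shows "\<exists>l. m1 = l * mp1 g12 g13 g23 t \<and> m2 = l * mp2 g12 g13 g23 t \<and> m3 = l * mp3 g12 g13 g23 t"
proof (cases t)
  case (real r)
  define e0 where "e0 = m2 - m3*r"
  define e1 where "e1 = m1*(g13-1) + m2*(g23-1) + m1*(g12-1)*r"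
  define e2 where "e2 = m1*(g13-1) + m1*(g12-1)*r + m3*(g23-1)*r"
  have q0: "E0 g12 g13 g23 m1 m2 m3 t = e0" using real e0_def by simp
  have q1: "E1 g12 g13 g23 m1 m2 m3 t = e1" using real e1_def by simp
  have q2: "E2 g12 g13 g23 m1 m2 m3 t = e2" using real e2_def by simp
  have Z1: "e1 * e2 = 0" using z1 by (simp only: q1 q2)
  have Z2: "e0 * e1 = 0" using z2 c by (simp only: q0 q1) simp
  have Z3: "e0 * e2 = 0" using z3 a by (simp only: q0 q2) simp
  have diff: "e1 - e2 = (g23-1) * e0" unfolding e0_def e1_def e2_def by (simp add: algebra_simps)
  have e0: "e0 = 0"
  proof (rule ccontr)
    assume "e0 \<noteq> 0"
    hence "e1 = 0" "e2 = 0" using Z2 Z3 by auto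
    thus False using diff b \<open>e0 \<noteq> 0\<close> by simp
  qed
  hence "e2 = e1" using diff by simp
  hence "e1 * e1 = 0" using Z1 by simp
  hence e1: "e1 = 0" by simp
  have m2: "m2 = m3*r" using e0 unfolding e0_def by simp
  have key: "m1*((g12-1)*r + (g13-1)) = - m3*r*(g23-1)" using e1 m2 unfolding e1_def by (simp add: algebra_simps)
  show ?thesis
  proof (cases "(g12-1)*r + (g13-1) = 0")
    case False
    define K where "K = (g12-1)*r + (g13-1)"
    have KK: "K \<noteq> 0" using False K_def by simp
    have p1: "mp1 g12 g13 g23 t = -(g23-1)*r" using real by simp
    have p2: "mp2 g12 g13 g23 t = r*K" using real unfolding K_def by (simp add: power2_eq_square algebra_simps)
    have p3: "mp3 g12 g13 g23 t = K" using real unfolding K_def by simp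
    have k2: "m1*K = - m3*r*(g23-1)" using key unfolding K_def .
    have "m1 = (m3/K) * (-(g23-1)*r)" using k2 KK by (simp add: field_simps)
    moreover have "m2 = (m3/K) * (r*K)" using m2 KK by simp
    moreover have "m3 = (m3/K) * K" using KK by simp
    ultimately show ?thesis unfolding p1 p2 p3 by blast
  next
    case True
    hence "r \<noteq> 0" using c by auto
    hence "m3 = 0" using key True b by simp
    have "mp2 g12 g13 g23 t = r * ((g12-1)*r + (g13-1))" using real by (simp add: power2_eq_square algebra_simps)
    hence p2: "mp2 g12 g13 g23 t = 0" using True by simp
    have p3: "mp3 g12 g13 g23 t = 0" using real True by simp
    have p1: "mp1 g12 g13 g23 t \<noteq> 0" using real b \<open>r \<noteq> 0\<close> by simp
    show ?thesis using p1 p2 p3 m2 \<open>m3 = 0\<close>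
      by (intro exI[of _ "m1/mp1 g12 g13 g23 t"]) simp
  qed
next
  case PInf
  have "m1 = 0 \<and> m3 = 0"
    by (rule mpp_zero_inf[OF a b c]) (use z1 z2 z3 PInf in \<open>simp_all\<close>)
  thus ?thesis using PInf a by (intro exI[of _ "m2/(g12-1)"]) simp
next
  case MInf
  have "m1 = 0 \<and> m3 = 0"
    by (rule mpp_zero_inf[OF a b c]) (use z1 z2 z3 MInf in \<open>simp_all\<close>)
  thus ?thesis using MInf a by (intro exI[of _ "m2/(g12-1)"]) simp
qed


lemma alg_key:
  fixes g1 g2 g3 y1 y2 y3 P12 P13 P23 m1 m2 m3 G12 G13 G23 :: real
  assumes e1: "g1^2*(1 - y1) = 1" and e2: "g2^2*(1 - y2) = 1" and e3: "g3^2*(1 - y3) = 1"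
    and G12: "G12 = g1*g2*(1 - P12)" and G13: "G13 = g1*g3*(1 - P13)" and G23: "G23 = g2*g3*(1 - P23)"
  shows "(m1*g1 + m2*g2 + m3*g3)^2 - ((m1*g1)^2*y1 + (m2*g2)^2*y2 + (m3*g3)^2*y3 + 2*(m1*g1)*(m2*g2)*P12 + 2*(m1*g1)*(m3*g3)*P13 + 2*(m2*g2)*(m3*g3)*P23)
     = (m1+m2+m3)^2 + 2*qf (G12-1) (G23-1) (G13-1) m1 m2 m3"
proof -
  have "(m1*g1 + m2*g2 + m3*g3)^2 - ((m1*g1)^2*y1 + (m2*g2)^2*y2 + (m3*g3)^2*y3 + 2*(m1*g1)*(m2*g2)*P12 + 2*(m1*g1)*(m3*g3)*P13 + 2*(m2*g2)*(m3*g3)*P23)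
     - ((m1+m2+m3)^2 + 2*qf (G12-1) (G23-1) (G13-1) m1 m2 m3)
     = m1^2*(g1^2*(1 - y1) - 1) + m2^2*(g2^2*(1 - y2) - 1) + m3^2*(g3^2*(1 - y3) - 1)"
    unfolding qf_def G12 G13 G23 by (simp add: algebra_simps power2_eq_square)
  also have "\<dots> = 0" using e1 e2 e3 by simp
  finally show ?thesis by simp
qed

definition Nm :: "real \<Rightarrow> 'a \<Rightarrow> 'a \<Rightarrow> 'a \<Rightarrow> real \<Rightarrow> real \<Rightarrow> real \<Rightarrow> 'a::euclidean_space" where
  "Nm s A1 A2 A3 m1 m2 m3 = (m1 * egamma s A1) *\<^sub>R A1 + (m2 * egamma s A2) *\<^sub>R A2 + (m3 * egamma s A3) *\<^sub>R A3"

lemma gbary_Nm: "gbary s A1 A2 A3 m1 m2 m3 = (1 / gbary_den s A1 A2 A3 m1 m2 m3) *\<^sub>R Nm s A1 A2 A3 m1 m2 m3"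
  unfolding gbary_def gbary_den_def Nm_def by simp

lemma Nm_gbary: "gbary_den s A1 A2 A3 m1 m2 m3 \<noteq> 0 \<Longrightarrow>
   Nm s A1 A2 A3 m1 m2 m3 = gbary_den s A1 A2 A3 m1 m2 m3 *\<^sub>R gbary s A1 A2 A3 m1 m2 m3"
  unfolding gbary_Nm by simp

lemma Nm_lin: "Nm s A1 A2 A3 (x*m1 + y*n1) (x*m2 + y*n2) (x*m3 + y*n3)
   = x *\<^sub>R Nm s A1 A2 A3 m1 m2 m3 + y *\<^sub>R Nm s A1 A2 A3 n1 n2 n3"
  unfolding Nm_def by (simp add: algebra_simps scaleR_add_right)

lemma den_lin: "gbary_den s A1 A2 A3 (x*m1 + y*n1) (x*m2 + y*n2) (x*m3 + y*n3)
   = x * gbary_den s A1 A2 A3 m1 m2 m3 + y * gbary_den s A1 A2 A3 n1 n2 n3"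
  unfolding gbary_den_def by (simp add: algebra_simps)

lemma Nm_scale: "Nm s A1 A2 A3 (l*m1) (l*m2) (l*m3) = l *\<^sub>R Nm s A1 A2 A3 m1 m2 m3"
  unfolding Nm_def by (simp add: algebra_simps scaleR_add_right)

lemma den_scale: "gbary_den s A1 A2 A3 (l*m1) (l*m2) (l*m3) = l * gbary_den s A1 A2 A3 m1 m2 m3"
  unfolding gbary_den_def by (simp add: algebra_simps)

lemma gbary_scale: "l \<noteq> 0 \<Longrightarrow> gbary s A1 A2 A3 (l*m1) (l*m2) (l*m3) = gbary s A1 A2 A3 m1 m2 m3"
  unfolding gbary_Nm Nm_scale den_scale by simp

lemma norm3: "(norm (a *\<^sub>R u + b *\<^sub>R v + c *\<^sub>R w))^2 =
   a^2*(norm u)^2 + b^2*(norm v)^2 + c^2*(norm w)^2 + 2*a*b*(u \<bullet> v) + 2*a*c*(u \<bullet> w) + 2*b*c*(v \<bullet> w)"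
  unfolding power2_norm_eq_inner
  by (simp add: inner_add_left inner_add_right inner_commute algebra_simps power2_eq_square)

lemma gam_ij:
  assumes "s>0" "norm A < s" "norm B < s"
  shows "egamma s (eadd s (-A) B) = egamma s A * egamma s B * (1 - (A \<bullet> B)/s^2)"
  using eadd_gamma[of s "-A" B] assms by simp

lemma key_Q:
  assumes s: "s>0" and a1: "norm A1 < s" and a2: "norm A2 < s" and a3: "norm A3 < s"
  shows "(gbary_den s A1 A2 A3 m1 m2 m3)^2 - (norm (Nm s A1 A2 A3 m1 m2 m3))^2/s^2
    = (m1+m2+m3)^2 + 2*qf (egamma s (eadd s (-A1) A2) - 1) (egamma s (eadd s (-A2) A3) - 1) (egamma s (eadd s (-A1) A3) - 1) m1 m2 m3"
proof -
  have n: "(norm (Nm s A1 A2 A3 m1 m2 m3))^2/s^2 =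
     (m1*egamma s A1)^2*((norm A1)^2/s^2) + (m2*egamma s A2)^2*((norm A2)^2/s^2) + (m3*egamma s A3)^2*((norm A3)^2/s^2)
     + 2*(m1*egamma s A1)*(m2*egamma s A2)*((A1 \<bullet> A2)/s^2) + 2*(m1*egamma s A1)*(m3*egamma s A3)*((A1 \<bullet> A3)/s^2)
     + 2*(m2*egamma s A2)*(m3*egamma s A3)*((A2 \<bullet> A3)/s^2)"
    unfolding Nm_def norm3 by (simp add: add_divide_distrib)
  show ?thesis unfolding n gbary_den_def
    by (rule alg_key[OF eg_sq[OF s a1] eg_sq[OF s a2] eg_sq[OF s a3] gam_ij[OF s a1 a2] gam_ij[OF s a1 a3] gam_ij[OF s a2 a3]])
qed


lemma eg_norm_eq: "norm u = norm v \<Longrightarrow> egamma s u = egamma s v"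
  unfolding egamma_def by simp

lemma eg_inj:
  assumes "s>0" "norm u < s" "norm v < s" "egamma s u = egamma s v"
  shows "norm u = norm v"
proof -
  have "(norm u)^2 < s^2" "(norm v)^2 < s^2" using assms by (simp_all add: power_strict_mono)
  hence a: "1 - (norm u)^2/s^2 > 0" "1 - (norm v)^2/s^2 > 0" using assms by auto
  have "sqrt (1 - (norm u)^2/s^2) = sqrt (1 - (norm v)^2/s^2)"
    using assms(4) a unfolding egamma_def by (simp add: divide_inverse)
  hence "1 - (norm u)^2/s^2 = 1 - (norm v)^2/s^2" using a by simp
  hence "(norm u)^2 = (norm v)^2" using assms(1) by simp
  thus ?thesis by (simp add: power2_eq_iff_nonneg)
qed

lemma one_minus_pos:
  assumes "s>0" "norm C < s" "norm A < s" shows "1 - (C \<bullet> A)/s^2 > 0"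
  using phi_pos[of s "-C" A] assms by simp

lemma lin_H:
  fixes C A1 A2 A3 :: "'a::euclidean_space"
  assumes "egamma s A2 * (1 - (C \<bullet> A2)/s^2) = H" "egamma s A3 * (1 - (C \<bullet> A3)/s^2) = H"
    "egamma s A1 * (1 - (C \<bullet> A1)/s^2) = H"
  shows "gbary_den s A1 A2 A3 m1 m2 m3 - (C \<bullet> Nm s A1 A2 A3 m1 m2 m3)/s^2 = H*(m1+m2+m3)"
proof -
  have "gbary_den s A1 A2 A3 m1 m2 m3 - (C \<bullet> Nm s A1 A2 A3 m1 m2 m3)/s^2
     = m1*(egamma s A1 * (1 - (C \<bullet> A1)/s^2)) + m2*(egamma s A2 * (1 - (C \<bullet> A2)/s^2)) + m3*(egamma s A3 * (1 - (C \<bullet> A3)/s^2))"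
    unfolding gbary_den_def Nm_def by (simp add: inner_add_right algebra_simps add_divide_distrib diff_divide_distrib)
  also have "\<dots> = m1*H + m2*H + m3*H" by (simp only: assms)
  finally show ?thesis by (simp add: algebra_simps)
qed

locale circ_setup =
  fixes s :: real and A1 A2 A3 C :: "'a::euclidean_space"
  assumes s: "s > 0" and a1: "norm A1 < s" and a2: "norm A2 < s" and a3: "norm A3 < s"
    and c: "norm C < s"
    and d2: "gdist s C A1 = gdist s C A2" and d3: "gdist s C A1 = gdist s C A3"
begin

definition "H = egamma s A1 * (1 - (C \<bullet> A1)/s^2)"

lemma H2: "egamma s A2 * (1 - (C \<bullet> A2)/s^2) = H"
proof -
  have "egamma s (eadd s (-C) A2) = egamma s (eadd s (-C) A1)"
    using d2 unfolding gdist_def by (intro eg_norm_eq) simp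
  hence "egamma s C * (egamma s A2 * (1 - (C \<bullet> A2)/s^2)) = egamma s C * H"
    unfolding H_def gam_ij[OF s c a1] gam_ij[OF s c a2] by (simp add: algebra_simps)
  thus ?thesis using eg_pos[OF s c] by simp
qed

lemma H3: "egamma s A3 * (1 - (C \<bullet> A3)/s^2) = H"
proof -
  have "egamma s (eadd s (-C) A3) = egamma s (eadd s (-C) A1)"
    using d3 unfolding gdist_def by (intro eg_norm_eq) simp
  hence "egamma s C * (egamma s A3 * (1 - (C \<bullet> A3)/s^2)) = egamma s C * H"
    unfolding H_def gam_ij[OF s c a1] gam_ij[OF s c a3] by (simp add: algebra_simps)
  thus ?thesis using eg_pos[OF s c] by simp
qed

lemma H_pos: "H > 0"
  unfolding H_def using eg_pos[OF s a1] one_minus_pos[OF s c a1] by simp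

lemma gA1: "egamma s (eadd s (-C) A1) = egamma s C * H"
  unfolding H_def gam_ij[OF s c a1] by (simp add: algebra_simps)

lemma lin: "gbary_den s A1 A2 A3 m1 m2 m3 - (C \<bullet> Nm s A1 A2 A3 m1 m2 m3)/s^2 = H*(m1+m2+m3)"
  by (rule lin_H[OF H2 H3]) (simp add: H_def)

abbreviation "qq m1 m2 m3 \<equiv> qf (egamma s (eadd s (-A1) A2) - 1) (egamma s (eadd s (-A2) A3) - 1) (egamma s (eadd s (-A1) A3) - 1) m1 m2 m3"

lemma circ_conic:
  assumes D1: "gbary_den s A1 A2 A3 m1 m2 m3 = 1"
    and X: "X = Nm s A1 A2 A3 m1 m2 m3" and Xb: "norm X < s"
    and on: "gdist s C X = gdist s C A1"
  shows "qq m1 m2 m3 = 0"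
proof -
  let ?g = "egamma s X" and ?S = "m1+m2+m3"
  have "egamma s (eadd s (-C) X) = egamma s (eadd s (-C) A1)"
    using on unfolding gdist_def by (intro eg_norm_eq) simp
  hence "egamma s C * (?g * (1 - (C \<bullet> X)/s^2)) = egamma s C * H"
    unfolding gA1 gam_ij[OF s c Xb] by (simp add: algebra_simps)
  hence e1: "?g * (1 - (C \<bullet> X)/s^2) = H" using eg_pos[OF s c] by simp
  have "1 - (C \<bullet> X)/s^2 = H * ?S" using lin[of m1 m2 m3] D1 X by simp
  hence "?g * (H * ?S) = H" using e1 by simp
  hence "H * (?g * ?S) = H * 1" by (simp add: algebra_simps)
  hence "?g * ?S = 1" using H_pos by simp
  moreover have "1 - (norm X)^2/s^2 = ?S^2 + 2 * qq m1 m2 m3"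
    using key_Q[OF s a1 a2 a3, of m1 m2 m3] D1 X by simp
  moreover have "?g^2 * (1 - (norm X)^2/s^2) = 1" by (rule eg_sq[OF s Xb])
  ultimately have "?g^2 * (?S^2 + 2 * qq m1 m2 m3) = (?g * ?S)^2" by simp
  hence "?g^2 * (?S^2 + 2 * qq m1 m2 m3) = ?g^2 * ?S^2" by (simp only: power_mult_distrib)
  hence "?g^2 * (2 * qq m1 m2 m3) = 0" by (simp add: distrib_left)
  thus ?thesis using eg_pos[OF s Xb] by simp
qed

lemma conic_circ:
  assumes D: "gbary_den s A1 A2 A3 m1 m2 m3 \<noteq> 0" and q: "qq m1 m2 m3 = 0"
    and X: "X = gbary s A1 A2 A3 m1 m2 m3"
  shows "norm X < s" and "gdist s C X = gdist s C A1"
proof -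
  define N where "N = Nm s A1 A2 A3 m1 m2 m3"
  define d where "d = gbary_den s A1 A2 A3 m1 m2 m3"
  define S where "S = m1 + m2 + m3"
  have XN: "X = (1/d) *\<^sub>R N" unfolding X gbary_Nm N_def d_def ..
  have Q: "d^2 - (norm N)^2/s^2 = S^2" using key_Q[OF s a1 a2 a3, of m1 m2 m3] q
    unfolding N_def d_def S_def by simp
  have L: "d - (C \<bullet> N)/s^2 = H*S" using lin[of m1 m2 m3] unfolding N_def d_def S_def .
  have dnz: "d \<noteq> 0" using D d_def by simp
  have Snz: "S \<noteq> 0"
  proof
    assume S0: "S = 0"
    hence nN: "(norm N)^2 = s^2 * d^2" using Q s by (simp add: field_simps)
    hence "(norm N)^2 = (s * \<bar>d\<bar>)^2" by (simp add: power_mult_distrib)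
    hence nN': "norm N = s * \<bar>d\<bar>" using s by (subst (asm) power2_eq_iff_nonneg) auto
    have CN: "C \<bullet> N = s^2 * d" using L S0 s by (simp add: field_simps)
    have "\<bar>C \<bullet> N\<bar> \<le> norm C * norm N" by (rule Cauchy_Schwarz_ineq2)
    also have "\<dots> < s * norm N" using c nN' dnz s by (intro mult_strict_right_mono) auto
    also have "\<dots> = s^2 * \<bar>d\<bar>" using nN' by (simp add: power2_eq_square)
    finally show False using CN s by (simp add: abs_mult)
  qed
  have nX: "1 - (norm X)^2/s^2 = S^2/d^2"
  proof -
    have "(norm X)^2 = (norm N)^2 / d^2" unfolding XN by (simp add: power_divide)
    hence "1 - (norm X)^2/s^2 = (d^2 - (norm N)^2/s^2)/d^2" using dnz by (simp add: field_simps)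
    thus ?thesis using Q by simp
  qed
  have pos: "S^2/d^2 > 0" using Snz dnz by simp
  hence "(norm X)^2/s^2 < 1" using nX by simp
  hence nsq: "(norm X)^2 < s^2" using s by (simp add: divide_less_eq)
  show Xb: "norm X < s" by (rule power2_less_imp_less[OF nsq]) (use s in simp)
  have gX: "egamma s X = \<bar>d\<bar> / \<bar>S\<bar>"
    unfolding egamma_def nX using dnz Snz by (simp add: real_sqrt_divide)
  have cX: "1 - (C \<bullet> X)/s^2 = H*S/d"
  proof -
    have "C \<bullet> X = (C \<bullet> N)/d" unfolding XN by simp
    hence "1 - (C \<bullet> X)/s^2 = (d - (C \<bullet> N)/s^2)/d" using dnz by (simp add: field_simps)
    thus ?thesis using L by simp
  qed
  have E: "egamma s (eadd s (-C) X) = egamma s C * H * ((\<bar>d\<bar>/d) * (S/\<bar>S\<bar>))"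
    unfolding gam_ij[OF s c Xb] gX cX by (simp add: field_simps)
  have Epos: "egamma s (eadd s (-C) X) > 0"
    by (rule eg_pos[OF s]) (rule eadd_in_ball[OF s], use c Xb in auto)
  have CH: "egamma s C * H > 0" using eg_pos[OF s c] H_pos by simp
  have sgn: "(\<bar>d\<bar>/d) * (S/\<bar>S\<bar>) = 1 \<or> (\<bar>d\<bar>/d) * (S/\<bar>S\<bar>) = -1"
    using dnz Snz by (cases "d > 0"; cases "S > 0") auto
  have "(\<bar>d\<bar>/d) * (S/\<bar>S\<bar>) = 1"
  proof (rule ccontr)
    assume "(\<bar>d\<bar>/d) * (S/\<bar>S\<bar>) \<noteq> 1"
    hence m: "(\<bar>d\<bar>/d) * (S/\<bar>S\<bar>) = -1" using sgn by blast
    have "egamma s (eadd s (-C) X) = - (egamma s C * H)" using E unfolding m by simp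
    thus False using Epos CH by linarith
  qed
  hence "egamma s (eadd s (-C) X) = egamma s (eadd s (-C) A1)" using E gA1 by simp
  have nc: "norm (-C) < s" using c by simp
  from \<open>egamma s (eadd s (-C) X) = egamma s (eadd s (-C) A1)\<close> show "gdist s C X = gdist s C A1" unfolding gdist_def
    using eg_inj[OF s eadd_in_ball[OF s nc Xb] eadd_in_ball[OF s nc a1]] by blast
qed

end


lemma eadd_zero_right[simp]: "eadd s u 0 = u"
  unfolding eadd_def by simp

lemma eg_ne1:
  assumes "s>0" "norm v < s" "v \<noteq> 0" shows "egamma s v - 1 \<noteq> 0"
proof
  assume "egamma s v - 1 = 0"
  hence "egamma s v = 1" by simp
  have "(norm v)^2 < s^2" using assms by (simp add: power_strict_mono)
  hence a: "1 - (norm v)^2/s^2 > 0" using assms by auto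
  have "sqrt (1 - (norm v)^2/s^2) = 1" using \<open>egamma s v = 1\<close> a unfolding egamma_def by (simp add: divide_eq_1_iff)
  hence "(norm v)^2/s^2 = 0" by simp
  thus False using assms by simp
qed

lemma kxa_alg:
  fixes g S x k a r b :: real
  assumes "k*S*(1+g) = g" "a*g = 1" "x*g^2 = S*(g^2-1)" "r*S = 1" "b*(1+g) = 1"
  shows "k*x = 1 - a"
proof -
  have kk: "k = g*r*b" using assms
    by (metis mult.assoc mult.commute mult_1_right)
  have xx: "x = S - S*a*a" using assms(2,3) by algebra
  show "k*x = 1 - a" unfolding kk xx using assms(2,4,5) by algebra
qed

lemma kx_rel:
  assumes "s>0" "norm A < s"
  shows "(1/s^2)*(egamma s A/(1 + egamma s A)) * (norm A)^2 = 1 - 1/egamma s A"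
proof -
  define g where "g = egamma s A"
  have gp: "g > 0" using eg_pos[OF assms] g_def by simp
  have rel: "(norm A)^2 * g^2 = s^2 * (g^2 - 1)" using eg_rel[OF assms] g_def by simp
  have "1+g \<noteq> 0" "s^2 \<noteq> 0" using gp assms(1) by auto
  hence k: "((1/s^2)*(g/(1+g))) * s^2 * (1+g) = g" by simp
  show ?thesis using kxa_alg[OF k, of "1/g" "(norm A)^2" "1/s^2" "1/(1+g)"] rel gp assms(1) \<open>1+g \<noteq> 0\<close>
    unfolding g_def[symmetric] by simp
qed

lemma scale_inv_cancel: "c \<noteq> 0 \<Longrightarrow> v = c *\<^sub>R ((1/c) *\<^sub>R (v::'a::real_vector))"
  by simp

context
  fixes s :: real and A1 :: "'a::euclidean_space"
  assumes s: "s > 0" and a1: "norm A1 < s"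
begin

definition "kk = (1/s^2)*(egamma s A1/(1 + egamma s A1))"
definition "MM v = (kk*(A1 \<bullet> v) - 1) *\<^sub>R A1 + (1/egamma s A1) *\<^sub>R v"

lemma eadd_M: "eadd s (-A1) v = (1/(1 - (A1 \<bullet> v)/s^2)) *\<^sub>R MM v"
  unfolding eadd_expand MM_def kk_def by (simp add: algebra_simps)

lemma M_A1: "MM A1 = 0"
proof -
  have "kk*(A1 \<bullet> A1) - 1 + 1/egamma s A1 = 0"
    using kx_rel[OF s a1] unfolding kk_def by (simp add: power2_norm_eq_inner)
  hence "(kk*(A1 \<bullet> A1) - 1) *\<^sub>R A1 + (1/egamma s A1) *\<^sub>R A1 = 0"
    by (simp add: scaleR_left_distrib[symmetric])
  thus ?thesis unfolding MM_def .
qed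

lemma M_other: assumes "norm B < s" shows "MM B = (1 - (A1 \<bullet> B)/s^2) *\<^sub>R eadd s (-A1) B"
proof -
  have "1 - (A1 \<bullet> B)/s^2 > 0" using one_minus_pos[OF s a1 assms] .
  hence nz: "1 - (A1 \<bullet> B)/s^2 \<noteq> 0" by linarith
  show ?thesis unfolding eadd_M by (rule scale_inv_cancel[OF nz])
qed

lemma M_comb: "MM (w1 *\<^sub>R A1 + w2 *\<^sub>R A2 + w3 *\<^sub>R A3) + (1 - (w1 + w2 + w3)) *\<^sub>R A1
   = w1 *\<^sub>R MM A1 + w2 *\<^sub>R MM A2 + w3 *\<^sub>R MM A3"
  unfolding MM_def by (simp add: algebra_simps inner_add_right scaleR_add_right)

end

lemma in_gyroplane:
  assumes s: "s > 0" and a1: "norm A1 < s" and a2: "norm A2 < s" and a3: "norm A3 < s"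
    and D: "gbary_den s A1 A2 A3 m1 m2 m3 \<noteq> 0" and X: "X = gbary s A1 A2 A3 m1 m2 m3"
    and Xb: "norm X < s"
  shows "X \<in> gyroplane s A1 A2 A3"
proof -
  define d where "d = gbary_den s A1 A2 A3 m1 m2 m3"
  define w1 where "w1 = m1 * egamma s A1"
  define w2 where "w2 = m2 * egamma s A2"
  define w3 where "w3 = m3 * egamma s A3"
  have dd: "d = w1 + w2 + w3" unfolding d_def gbary_den_def w1_def w2_def w3_def ..
  have dnz: "d \<noteq> 0" using D d_def by simp
  have XX: "X = (w1/d) *\<^sub>R A1 + (w2/d) *\<^sub>R A2 + (w3/d) *\<^sub>R A3"
    unfolding X gbary_Nm Nm_def d_def[symmetric] w1_def w2_def w3_def by (simp add: scaleR_add_right)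
  have sum1: "w1/d + w2/d + w3/d = 1" using dnz unfolding dd by (simp add: add_divide_distrib[symmetric])
  have "MM s A1 X = (w1/d) *\<^sub>R MM s A1 A1 + (w2/d) *\<^sub>R MM s A1 A2 + (w3/d) *\<^sub>R MM s A1 A3"
  proof -
    have "MM s A1 ((w1/d) *\<^sub>R A1 + (w2/d) *\<^sub>R A2 + (w3/d) *\<^sub>R A3) + (1 - (w1/d + w2/d + w3/d)) *\<^sub>R A1
      = (w1/d) *\<^sub>R MM s A1 A1 + (w2/d) *\<^sub>R MM s A1 A2 + (w3/d) *\<^sub>R MM s A1 A3" by (rule M_comb[OF s a1])
    thus ?thesis unfolding XX[symmetric] sum1 by simp
  qed
  also have "\<dots> = ((w2/d) * (1 - (A1 \<bullet> A2)/s^2)) *\<^sub>R eadd s (-A1) A2 + ((w3/d) * (1 - (A1 \<bullet> A3)/s^2)) *\<^sub>R eadd s (-A1) A3"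
    unfolding M_A1[OF s a1] M_other[OF s a1 a2] M_other[OF s a1 a3] by simp
  finally have "MM s A1 X \<in> span {eadd s (-A1) A2, eadd s (-A1) A3}"
    by (simp add: span_add span_mul span_base)
  hence wsp: "eadd s (-A1) X \<in> span {eadd s (-A1) A2, eadd s (-A1) A3}"
    unfolding eadd_M[OF s a1] by (rule span_mul)
  have ec: "X = eadd s A1 (eadd s (-A1) X)" by (rule eadd_cancel[OF s a1 Xb, symmetric])
  have "X \<in> {eadd s A1 w |w. w \<in> span {eadd s (-A1) A2, eadd s (-A1) A3}}"
    using wsp ec by blast
  moreover have "X \<in> gball s" unfolding gball_def using Xb by simp
  ultimately show ?thesis unfolding gyroplane_def by blast
qed


lemma q_expand:
  "qf a b c (x*m1 + y*n1) (x*m2 + y*n2) (x*m3 + y*n3)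
   = x^2 * qf a b c m1 m2 m3 + x*y * Bf a b c m1 m2 m3 n1 n2 n3 + y^2 * qf a b c n1 n2 n3"
  unfolding qf_def Bf_def power2_eq_square by (simp add: algebra_simps)

lemma line_help:
  fixes P Q :: "'a::real_vector"
  assumes "d \<noteq> 0" shows "(1/d) *\<^sub>R ((d + c) *\<^sub>R P - c *\<^sub>R Q) = P + (-c/d) *\<^sub>R (Q - P)"
proof -
  have "(1/d) *\<^sub>R ((d + c) *\<^sub>R P - c *\<^sub>R Q) = ((1/d)*(d+c)) *\<^sub>R P - (c/d) *\<^sub>R Q"
    by (simp add: scaleR_diff_right)
  also have "(1/d)*(d+c) = 1 + c/d" using assms by (simp add: field_simps)
  finally show ?thesis by (simp add: scaleR_diff_right scaleR_add_left algebra_simps)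
qed
lemma nonneg_zero_aux: fixes X Y s :: real assumes "- X / s^2 = Y" "Y \<ge> 0" "X \<ge> 0" "s > 0" shows "X = 0"
proof -
  have "X / s^2 \<ge> 0" using assms by simp
  moreover have "X / s^2 \<le> 0" using assms by linarith
  ultimately have "X / s^2 = 0" by linarith
  thus ?thesis using assms by simp
qed

theorem mainTheorem14:
  fixes s :: real and A1 A2 A3 Ctr P P' P'' :: "'a::euclidean_space"
    and m1 m2 m3 :: real and t :: ereal
  defines "g12 \<equiv> egamma s (eadd s (- A1) A2)"
      and "g13 \<equiv> egamma s (eadd s (- A1) A3)"
      and "g23 \<equiv> egamma s (eadd s (- A2) A3)"
  assumes s_pos: "s > 0"
    and dim: "DIM('a) \<ge> 2"
    and tri: "gyrotriangle s A1 A2 A3"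
    and circ: "circumcentre s A1 A2 A3 Ctr"
    and P_den: "gbary_den s A1 A2 A3 m1 m2 m3 \<noteq> 0"
    and P_def: "P = gbary s A1 A2 A3 m1 m2 m3"
    and P_in: "P \<in> gyroplane s A1 A2 A3"
    and P'_den: "gbary_den s A1 A2 A3 (mp1 g12 g13 g23 t) (mp2 g12 g13 g23 t) (mp3 g12 g13 g23 t) \<noteq> 0"
    and P'_def: "P' = gbary s A1 A2 A3 (mp1 g12 g13 g23 t) (mp2 g12 g13 g23 t) (mp3 g12 g13 g23 t)"
    and P'_on: "P' \<in> circumgyrocircle s A1 A2 A3 Ctr"
    and P'_ne: "P' \<noteq> P"
    and P''_on: "P'' \<in> circumgyrocircle s A1 A2 A3 Ctr \<inter> gyroline s P P'"
    and P''_second: "P'' \<noteq> P' \<or> circumgyrocircle s A1 A2 A3 Ctr \<inter> gyroline s P P' = {P'}"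
  shows "P'' = gbary s A1 A2 A3
     (E1 g12 g13 g23 m1 m2 m3 t * E2 g12 g13 g23 m1 m2 m3 t)
     (E0 g12 g13 g23 m1 m2 m3 t * E1 g12 g13 g23 m1 m2 m3 t * (g13 - 1))
     (- E0 g12 g13 g23 m1 m2 m3 t * E2 g12 g13 g23 m1 m2 m3 t * (g12 - 1))"
proof -
  have a1: "norm A1 < s" and a2: "norm A2 < s" and a3: "norm A3 < s"
    using tri unfolding gyrotriangle_def gball_def by auto
  have indep: "\<not> dependent {eadd s (- A1) A2, eadd s (- A1) A3}"
    and uneq: "eadd s (- A1) A2 \<noteq> eadd s (- A1) A3"
    using tri unfolding gyrotriangle_def by auto
  have cb: "norm Ctr < s" using circ unfolding circumcentre_def gyroplane_def gball_def by auto
  have d2: "gdist s Ctr A1 = gdist s Ctr A2" and d3: "gdist s Ctr A1 = gdist s Ctr A3"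
    using circ unfolding circumcentre_def by auto
  interpret CS: circ_setup s A1 A2 A3 Ctr
    using s_pos a1 a2 a3 cb d2 d3 by unfold_locales
  have nA1: "norm (-A1) < s" and nA2: "norm (-A2) < s" using a1 a2 by simp_all
  have u2nz: "eadd s (- A1) A2 \<noteq> 0"
  proof
    assume h: "eadd s (- A1) A2 = 0"
    have "dependent {eadd s (- A1) A2, eadd s (- A1) A3}" by (rule dependent_zero) (simp add: h)
    thus False using indep by simp
  qed
  have u3nz: "eadd s (- A1) A3 \<noteq> 0"
  proof
    assume h: "eadd s (- A1) A3 = 0"
    have "dependent {eadd s (- A1) A2, eadd s (- A1) A3}" by (rule dependent_zero) (simp add: h)
    thus False using indep by simp
  qed
  have vnz: "eadd s (- A2) A3 \<noteq> 0"
  proof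
    assume "eadd s (- A2) A3 = 0"
    hence "A3 = A2" using eadd_cancel[OF s_pos a2 a3] by simp
    thus False using uneq by simp
  qed
  have ga: "g12 - 1 \<noteq> 0" unfolding g12_def by (rule eg_ne1[OF s_pos eadd_in_ball[OF s_pos nA1 a2] u2nz])
  have gc: "g13 - 1 \<noteq> 0" unfolding g13_def by (rule eg_ne1[OF s_pos eadd_in_ball[OF s_pos nA1 a3] u3nz])
  have gb: "g23 - 1 \<noteq> 0" unfolding g23_def by (rule eg_ne1[OF s_pos eadd_in_ball[OF s_pos nA2 a3] vnz])
  have qq_eq: "CS.qq x y z = qf (g12-1) (g23-1) (g13-1) x y z" for x y z
    unfolding g12_def g23_def g13_def ..
  define n1 where "n1 = mp1 g12 g13 g23 t"
  define n2 where "n2 = mp2 g12 g13 g23 t"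
  define n3 where "n3 = mp3 g12 g13 g23 t"
  define Dm where "Dm = gbary_den s A1 A2 A3 m1 m2 m3"
  define Dn where "Dn = gbary_den s A1 A2 A3 n1 n2 n3"
  define q where "q = qf (g12-1) (g23-1) (g13-1) m1 m2 m3"
  define B where "B = Bf (g12-1) (g23-1) (g13-1) m1 m2 m3 n1 n2 n3"
  define r1 where "r1 = E1 g12 g13 g23 m1 m2 m3 t * E2 g12 g13 g23 m1 m2 m3 t"
  define r2 where "r2 = E0 g12 g13 g23 m1 m2 m3 t * E1 g12 g13 g23 m1 m2 m3 t * (g13 - 1)"
  define r3 where "r3 = - E0 g12 g13 g23 m1 m2 m3 t * E2 g12 g13 g23 m1 m2 m3 t * (g12 - 1)"
  have DmNZ: "Dm \<noteq> 0" using P_den Dm_def by simp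
  have DnNZ: "Dn \<noteq> 0" using P'_den Dn_def n1_def n2_def n3_def by simp
  have qn: "qf (g12-1) (g23-1) (g13-1) n1 n2 n3 = 0" unfolding n1_def n2_def n3_def by (rule q_mp)
  have r1e: "r1 = B*m1 - q*n1" unfolding r1_def B_def q_def n1_def n2_def n3_def by (rule mpp_ident1)
  have r2e: "r2 = B*m2 - q*n2" unfolding r2_def B_def q_def n1_def n2_def n3_def by (rule mpp_ident2)
  have r3e: "r3 = B*m3 - q*n3" unfolding r3_def B_def q_def n1_def n2_def n3_def by (rule mpp_ident3)
  have PN: "Nm s A1 A2 A3 m1 m2 m3 = Dm *\<^sub>R P" unfolding P_def Dm_def by (rule Nm_gbary[OF P_den])
  have P'N: "Nm s A1 A2 A3 n1 n2 n3 = Dn *\<^sub>R P'"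
    unfolding P'_def Dn_def n1_def n2_def n3_def by (rule Nm_gbary[OF P'_den])
  have rnz: "\<not> (r1 = 0 \<and> r2 = 0 \<and> r3 = 0)"
  proof
    assume z: "r1 = 0 \<and> r2 = 0 \<and> r3 = 0"
    obtain l where l: "m1 = l * n1" "m2 = l * n2" "m3 = l * n3"
      using mpp_zero[OF ga gb gc] z unfolding r1_def r2_def r3_def n1_def n2_def n3_def by blast
    have "l \<noteq> 0" using P_den l by (auto simp: gbary_den_def)
    hence "P = P'" unfolding P_def P'_def l n1_def n2_def n3_def by (rule gbary_scale)
    thus False using P'_ne by simp
  qed
  have r_sum: "r1 = B*m1 + (-q)*n1" "r2 = B*m2 + (-q)*n2" "r3 = B*m3 + (-q)*n3"
    using r1e r2e r3e by simp_all
  have qr: "qf (g12-1) (g23-1) (g13-1) r1 r2 r3 = 0"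
    unfolding r_sum q_expand qn q_def B_def by (simp add: power2_eq_square)
  have goal_form: "gbary s A1 A2 A3 r1 r2 r3 = gbary s A1 A2 A3
     (E1 g12 g13 g23 m1 m2 m3 t * E2 g12 g13 g23 m1 m2 m3 t)
     (E0 g12 g13 g23 m1 m2 m3 t * E1 g12 g13 g23 m1 m2 m3 t * (g13 - 1))
     (- E0 g12 g13 g23 m1 m2 m3 t * E2 g12 g13 g23 m1 m2 m3 t * (g12 - 1))"
    unfolding r1_def r2_def r3_def ..
  from P''_on obtain u where P''u: "P'' = P + u *\<^sub>R (P' - P)" and P''b: "norm P'' < s"
    and P''c: "P'' \<in> circumgyrocircle s A1 A2 A3 Ctr"
    unfolding gyroline_def gball_def by auto
  show ?thesis
  proof (cases "P'' = P'")
    case False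
    define al where "al = (1 - u)/Dm"
    define be where "be = u/Dn"
    define k1 where "k1 = al*m1 + be*n1"
    define k2 where "k2 = al*m2 + be*n2"
    define k3 where "k3 = al*m3 + be*n3"
    have e1: "al*Dm = 1-u" unfolding al_def using DmNZ by simp
    have e2: "be*Dn = u" unfolding be_def using DnNZ by simp
    have Nk: "Nm s A1 A2 A3 k1 k2 k3 = P''"
      unfolding k1_def k2_def k3_def Nm_lin PN P'N scaleR_scaleR e1 e2 P''u
      by (simp add: algebra_simps)
    have Dk: "gbary_den s A1 A2 A3 k1 k2 k3 = 1"
      unfolding k1_def k2_def k3_def den_lin Dm_def[symmetric] Dn_def[symmetric] al_def be_def
      using DmNZ DnNZ by simp
    have "CS.qq k1 k2 k3 = 0"
      using P''c unfolding circumgyrocircle_def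
      by (intro CS.circ_conic[OF Dk Nk[symmetric] P''b]) auto
    moreover have "CS.qq k1 k2 k3 = al^2 * q + al*be*B"
      unfolding k1_def k2_def k3_def q_expand q_def B_def
      using qn by (simp add: g12_def g13_def g23_def)
    ultimately have "al^2 * q + al*be*B = 0" by simp
    hence ab: "al * (al*q + be*B) = 0" by (simp add: algebra_simps power2_eq_square)
    have alnz: "al \<noteq> 0"
    proof
      assume "al = 0"
      hence "u = 1" unfolding al_def using DmNZ by simp
      thus False using False P''u by simp
    qed
    hence ab2: "al*q + be*B = 0" using ab by simp
    have rk: "al * r1 = B * k1" "al * r2 = B * k2" "al * r3 = B * k3"
    proof -
      have e: "al*q = - (be*B)" using ab2 by simp
      show "al * r1 = B * k1"
      proof -
        have "al*r1 = B*(al*m1) - (al*q)*n1" unfolding r1e by (simp add: algebra_simps)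
        also have "\<dots> = B*k1" unfolding e k1_def by (simp add: algebra_simps)
        finally show ?thesis .
      qed
      show "al * r2 = B * k2"
      proof -
        have "al*r2 = B*(al*m2) - (al*q)*n2" unfolding r2e by (simp add: algebra_simps)
        also have "\<dots> = B*k2" unfolding e k2_def by (simp add: algebra_simps)
        finally show ?thesis .
      qed
      show "al * r3 = B * k3"
      proof -
        have "al*r3 = B*(al*m3) - (al*q)*n3" unfolding r3e by (simp add: algebra_simps)
        also have "\<dots> = B*k3" unfolding e k3_def by (simp add: algebra_simps)
        finally show ?thesis .
      qed
    qed
    have Bnz: "B \<noteq> 0"
    proof
      assume "B = 0"
      hence "r1 = 0 \<and> r2 = 0 \<and> r3 = 0" using rk alnz by simp
      thus False using rnz by simp
    qed
    have rr: "r1 = (B/al)*k1" "r2 = (B/al)*k2" "r3 = (B/al)*k3"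
      using rk alnz by (simp_all add: field_simps)
    have "gbary s A1 A2 A3 r1 r2 r3 = gbary s A1 A2 A3 k1 k2 k3"
      unfolding rr by (rule gbary_scale) (use Bnz alnz in simp)
    also have "\<dots> = P''" unfolding gbary_Nm Dk Nk by simp
    finally show ?thesis using goal_form by simp
  next
    case True
    hence single: "circumgyrocircle s A1 A2 A3 Ctr \<inter> gyroline s P P' = {P'}"
      using P''_second by simp
    define Dr where "Dr = gbary_den s A1 A2 A3 r1 r2 r3"
    have Dre: "Dr = B*Dm - q*Dn"
      unfolding Dr_def r_sum den_lin Dm_def Dn_def by simp
    have Nre: "Nm s A1 A2 A3 r1 r2 r3 = (B*Dm) *\<^sub>R P - (q*Dn) *\<^sub>R P'"
      unfolding r_sum Nm_lin PN P'N by (simp add: algebra_simps)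
    have DrNZ: "Dr \<noteq> 0"
    proof
      assume Dr0: "Dr = 0"
      define ka where "ka = B*Dm"
      have qD: "q*Dn = ka" using Dr0 Dre ka_def by simp
      have Nk: "Nm s A1 A2 A3 r1 r2 r3 = ka *\<^sub>R (P - P')" unfolding Nre qD ka_def[symmetric]
        by (simp add: algebra_simps)
      have "Dr^2 - (norm (Nm s A1 A2 A3 r1 r2 r3))^2/s^2 = (r1+r2+r3)^2 + 2*CS.qq r1 r2 r3"
        unfolding Dr_def by (rule key_Q[OF s_pos a1 a2 a3])
      hence "- (ka^2 * (norm (P - P'))^2)/s^2 = (r1+r2+r3)^2"
        unfolding Dr0 Nk qq_eq qr by (simp add: power_mult_distrib)
      moreover have "(r1+r2+r3)^2 \<ge> 0" by simp
      moreover have "ka^2 * (norm (P - P'))^2 \<ge> 0" by simp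
      ultimately have "ka^2 * (norm (P - P'))^2 = 0" using s_pos by (rule nonneg_zero_aux)
      hence "ka = 0" using P'_ne by simp
      hence "B = 0" using DmNZ ka_def by simp
      moreover have "q = 0" using qD \<open>ka = 0\<close> DnNZ by simp
      ultimately have "r1 = 0 \<and> r2 = 0 \<and> r3 = 0" using r1e r2e r3e by simp
      thus False using rnz by simp
    qed
    define X where "X = gbary s A1 A2 A3 r1 r2 r3"
    have DrNZ': "gbary_den s A1 A2 A3 r1 r2 r3 \<noteq> 0" using DrNZ Dr_def by simp
    have qr': "CS.qq r1 r2 r3 = 0" unfolding qq_eq by (rule qr)
    have Xb: "norm X < s" and Xd: "gdist s Ctr X = gdist s Ctr A1"
      using CS.conic_circ[OF DrNZ' qr' X_def] by auto
    have Xp: "X \<in> gyroplane s A1 A2 A3" by (rule in_gyroplane[OF s_pos a1 a2 a3 DrNZ' X_def Xb])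
    have Xc: "X \<in> circumgyrocircle s A1 A2 A3 Ctr" unfolding circumgyrocircle_def using Xp Xd by simp
    have Xl: "X = P + (- (q*Dn)/Dr) *\<^sub>R (P' - P)"
    proof -
      have "X = (1/Dr) *\<^sub>R ((B*Dm) *\<^sub>R P - (q*Dn) *\<^sub>R P')"
        unfolding X_def gbary_Nm Dr_def[symmetric] Nre ..
      also have "\<dots> = P + (- (q*Dn)/Dr) *\<^sub>R (P' - P)"
      proof -
        have "B*Dm = Dr + q*Dn" using Dre by simp
        thus ?thesis using line_help[OF DrNZ, of "q*Dn" P P'] by simp
      qed
      finally show ?thesis .
    qed
    have "X \<in> gyroline s P P'" unfolding gyroline_def gball_def using Xl Xb by blast
    hence "X = P'" using Xc single by blast
    thus ?thesis using True goal_form X_def by simp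
  qed
qed


end
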